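(* Let $v_1,v_2,v_3$ be a basis of $\mathbb{Z}^3$ such that $\|v_i\|^2$ is odd for all $i$. Then at most one of the numbers $\|v_1\|^2,\|v_2\|^2,\|v_3\|^2$ is congruent to $3\bmod 4$.
   Context: $\|\cdot\|$ is the Euclidean norm on $\mathbb{R}^3$. *)

theory Defs
  imports "HOL-Analysis.Analysis"
begin

definition sqnorm :: "int ^ 3 \<Rightarrow> int" where
  "sqnorm v = (\<Sum>i\<in>UNIV. (v $ i)^2)"

definition is_Z3_basis :: "int ^ 3 \<Rightarrow> int ^ 3 \<Rightarrow> int ^ 3 \<Rightarrow> bool" where
  "is_Z3_basis v1 v2 v3 \<longleftrightarrow>
     (\<forall>w :: int ^ 3. \<exists>!abc :: int \<times> int \<times> int.
        w = fst abc *s v1 + fst (snd abc) *s v2 + snd (snd abc) *s v3)"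

end

theory Submission
  imports Defs
begin

lemma sq_form: "\<exists>m. (x::int)^2 = 4*m + (if even x then 0 else 1)"
proof (cases "even x")
  case True then obtain k where "x = 2*k" by blast
  then show ?thesis using True by (intro exI[of _ "k*k"]) (simp add: power2_eq_square)
next
  case False then obtain k where "x = 2*k+1" using oddE by blast
  then show ?thesis using False by (intro exI[of _ "k*k+k"]) (simp add: power2_eq_square algebra_simps)
qed

lemma three_odd:
  assumes "sqnorm v mod 4 = 3" shows "odd (v$i)"
proof -
  have s: "sqnorm v = (v$1)^2 + (v$2)^2 + (v$3)^2" unfolding sqnorm_def by (simp add: sum_3)
  obtain m1 where m1: "(v$1)^2 = 4*m1 + (if even (v$1) then 0 else 1)" using sq_form by blast
  obtain m2 where m2: "(v$2)^2 = 4*m2 + (if even (v$2) then 0 else 1)" using sq_form by blast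
  obtain m3 where m3: "(v$3)^2 = 4*m3 + (if even (v$3) then 0 else 1)" using sq_form by blast
  have e: "(4*m1 + (if even (v$1) then 0 else 1) + (4*m2 + (if even (v$2) then 0 else 1)) + (4*m3 + (if even (v$3) then 0 else 1))) mod 4 = 3"
    using assms unfolding s m1 m2 m3 .
  have "odd (v$1) \<and> odd (v$2) \<and> odd (v$3)"
  proof (rule ccontr)
    assume "\<not> ?thesis"
    then show False using e by (auto split: if_splits; presburger)
  qed
  then show ?thesis using exhaust_3[of i] by auto
qed

lemma even_coeffs:
  assumes B: "is_Z3_basis v1 v2 v3" and ev: "\<And>i. even (w$i)"
    and w: "w = a *s v1 + b *s v2 + c *s v3"
  shows "even a"
proof -
  define u where "u = (\<chi> i. w$i div 2)"
  have wu: "w = 2 *s u" unfolding u_def using ev by (simp add: vec_eq_iff)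
  obtain abc where abc: "u = fst abc *s v1 + fst (snd abc) *s v2 + snd (snd abc) *s v3"
    using B unfolding is_Z3_basis_def by blast
  have w2: "w = (2 * fst abc) *s v1 + (2 * fst (snd abc)) *s v2 + (2 * snd (snd abc)) *s v3"
    unfolding wu abc by (simp add: vec_eq_iff algebra_simps)
  from B have "\<exists>!abc :: int \<times> int \<times> int.
        w = fst abc *s v1 + fst (snd abc) *s v2 + snd (snd abc) *s v3"
    unfolding is_Z3_basis_def by blast
  then have "(a,b,c) = (2 * fst abc, 2 * fst (snd abc), 2 * snd (snd abc))"
    using w w2 by (metis fst_conv snd_conv)
  then show ?thesis by auto
qed

lemma pair_contra:
  assumes B: "is_Z3_basis v1 v2 v3" and o1: "\<And>i. odd (x$i)" and o2: "\<And>i. odd (y$i)"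
    and w: "x - y = a *s v1 + b *s v2 + c *s v3" and oa: "odd a"
  shows False
proof -
  have "\<And>i. even ((x - y)$i)" using o1 o2 by simp
  then show False using even_coeffs[OF B _ w] oa by blast
qed

theorem proposition4:
  fixes v1 v2 v3 :: "int ^ 3"
  assumes "is_Z3_basis v1 v2 v3"
    and "odd (sqnorm v1)" and "odd (sqnorm v2)" and "odd (sqnorm v3)"
  shows "\<not> (sqnorm v1 mod 4 = 3 \<and> sqnorm v2 mod 4 = 3)
       \<and> \<not> (sqnorm v1 mod 4 = 3 \<and> sqnorm v3 mod 4 = 3)
       \<and> \<not> (sqnorm v2 mod 4 = 3 \<and> sqnorm v3 mod 4 = 3)"
proof (intro conjI notI; elim conjE)
  assume h1: "sqnorm v1 mod 4 = 3" and h2: "sqnorm v2 mod 4 = 3"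
  show False
    by (rule pair_contra[OF assms(1) three_odd[OF h1] three_odd[OF h2], of 1 "-1" 0])
       (simp_all add: vec_eq_iff)
next
  assume h1: "sqnorm v1 mod 4 = 3" and h2: "sqnorm v3 mod 4 = 3"
  show False
    by (rule pair_contra[OF assms(1) three_odd[OF h1] three_odd[OF h2], of 1 0 "-1"])
       (simp_all add: vec_eq_iff)
next
  assume h1: "sqnorm v2 mod 4 = 3" and h2: "sqnorm v3 mod 4 = 3"
  have B': "is_Z3_basis v2 v1 v3" using assms(1) unfolding is_Z3_basis_def
  proof -
    show "\<forall>w. \<exists>!abc :: int \<times> int \<times> int. w = fst abc *s v2 + fst (snd abc) *s v1 + snd (snd abc) *s v3"
    proof
      fix w
      from assms(1) obtain p where p: "w = fst p *s v1 + fst (snd p) *s v2 + snd (snd p) *s v3"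
        and u: "\<And>q. w = fst q *s v1 + fst (snd q) *s v2 + snd (snd q) *s v3 \<Longrightarrow> q = p"
        unfolding is_Z3_basis_def by metis
      show "\<exists>!abc :: int \<times> int \<times> int. w = fst abc *s v2 + fst (snd abc) *s v1 + snd (snd abc) *s v3"
      proof (rule ex1I[of _ "(fst (snd p), fst p, snd (snd p))"])
        show "w = fst (fst (snd p), fst p, snd (snd p)) *s v2 + fst (snd (fst (snd p), fst p, snd (snd p))) *s v1 + snd (snd (fst (snd p), fst p, snd (snd p))) *s v3"
          using p by (simp add: algebra_simps)
      next
        fix q :: "int \<times> int \<times> int"
        assume "w = fst q *s v2 + fst (snd q) *s v1 + snd (snd q) *s v3"
        then have "(fst (snd q), fst q, snd (snd q)) = p" by (intro u) (simp add: algebra_simps)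
        then show "q = (fst (snd p), fst p, snd (snd p))" by (cases q) auto
      qed
    qed
  qed
  show False
    by (rule pair_contra[OF B' three_odd[OF h1] three_odd[OF h2], of 1 0 "-1"])
       (simp_all add: vec_eq_iff)
qed

end
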